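(* For $S\subseteq\mathbb Z$, let $\mathcal T(S)=\{(i,j)\in\mathbb N_0\times\mathbb N_0: i-j\in S\}$. Then \[\tfrac14|S|^{1/2}\le\mathfrak s(\mathcal T(S))\le|S|^{1/2}.\] In particular, if $S$ is infinite then $\mathcal T(S)$ is not Schur bounded.
   Context: For a pattern $\mathcal P$, $\mathcal S(\mathcal P)$ is the set of matrices supported on $\mathcal P$ with entries of modulus at most $1$, and $\mathfrak s(\mathcal P)=\sup_{X\in\mathcal S(\mathcal P)}\|X\|_m$, where $\|X\|_m$ is the norm of the Schur multiplier $T=[t_{ij}]\mapsto[x_{ij}t_{ij}]$ on $\mathcal B(\ell^2)$. $\mathcal P$ is Schur bounded if every element of $\mathcal S(\mathcal P)$ gives a bounded Schur multiplier. $\mathbb N_0=\{0,1,2,\dots\}$. *)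

theory Defs
  imports Complex_Main "HOL-Library.Extended_Real"
begin

text \<open>The norm of a matrix as an operator on l^2(N_0), computed as the supremum of the
  norms of its finite upper-left sections (value infinity iff the matrix does not
  define a bounded operator).\<close>

definition mat_norm :: "(nat \<Rightarrow> nat \<Rightarrow> complex) \<Rightarrow> ereal" where
  "mat_norm A = (SUP n::nat. SUP xy \<in> {(x, y). (\<Sum>i<n. (cmod (x i))^2) \<le> 1 \<and> (\<Sum>i<n. (cmod (y i))^2) \<le> 1}.
      ereal (cmod (\<Sum>i<n. \<Sum>j<n. cnj (snd xy i) * A i j * fst xy j)))"

definition schur_norm :: "(nat \<Rightarrow> nat \<Rightarrow> complex) \<Rightarrow> ereal" where
  "schur_norm X = (SUP T \<in> {T. mat_norm T \<le> 1}. mat_norm (\<lambda>i j. X i j * T i j))"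

definition schur_class :: "(nat \<times> nat) set \<Rightarrow> (nat \<Rightarrow> nat \<Rightarrow> complex) set" where
  "schur_class P = {X. (\<forall>i j. (i, j) \<notin> P \<longrightarrow> X i j = 0) \<and> (\<forall>i j. cmod (X i j) \<le> 1)}"

definition schur_sup :: "(nat \<times> nat) set \<Rightarrow> ereal" where
  "schur_sup P = (SUP X \<in> schur_class P. schur_norm X)"

definition schur_bounded :: "(nat \<times> nat) set \<Rightarrow> bool" where
  "schur_bounded P \<longleftrightarrow> (\<forall>X \<in> schur_class P. schur_norm X < \<infinity>)"

definition toeplitz_pattern :: "int set \<Rightarrow> (nat \<times> nat) set" where
  "toeplitz_pattern S = {(i, j). int i - int j \<in> S}"

definition sqrt_card :: "'a set \<Rightarrow> ereal" where
  "sqrt_card S = (if finite S then ereal (sqrt (real (card S))) else \<infinity>)"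

end

theory Submission imports Defs "HOL-Analysis.Convex" "HOL-Library.Real_Mod"
begin

fun sgns :: "nat \<Rightarrow> real list list" where
  "sgns 0 = [[]]"
| "sgns (Suc n) = map ((#) 1) (sgns n) @ map ((#) (-1)) (sgns n)"

fun zs :: "real list \<Rightarrow> complex list \<Rightarrow> complex" where
  "zs (e # es) (a # as) = of_real e * a + zs es as"
| "zs _ _ = 0"

definition SG :: "(complex \<Rightarrow> real) \<Rightarrow> complex list \<Rightarrow> real" where
  "SG g as = sum_list (map (\<lambda>e. g (zs e as)) (sgns (length as)))"

lemma length_sgns[simp]: "length (sgns n) = 2 ^ n"
  by (induction n) auto

lemma sgns_props: "e \<in> set (sgns n) \<Longrightarrow> length e = n \<and> set e \<subseteq> {1, -1}"
  by (induction n arbitrary: e) force+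

lemma SG_Nil[simp]: "SG g [] = g 0"
  by (simp add: SG_def)

lemma SG_Cons: "SG g (a # as) = SG (\<lambda>z. g (a + z)) as + SG (\<lambda>z. g (- a + z)) as"
  by (simp add: SG_def o_def)

lemma SG_add: "SG (\<lambda>z. f z + g z) as = SG f as + SG g as"
  by (simp add: SG_def sum_list_addf)

lemma SG_cmult: "SG (\<lambda>z. c * f z) as = c * SG f as"
  by (simp add: SG_def sum_list_const_mult)

lemma SG_const: "SG (\<lambda>z. c) as = c * 2 ^ length as"
  by (simp add: SG_def sum_list_triv)

lemma SG_mono: "(\<And>z. f z \<le> g z) \<Longrightarrow> SG f as \<le> SG g as"
  unfolding SG_def by (rule sum_list_mono) auto

lemma par2: "cmod (a + z) ^ 2 + cmod (- a + z) ^ 2 = 2 * cmod z ^ 2 + 2 * cmod a ^ 2"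
  unfolding cmod_power2 by (simp add: power2_eq_square algebra_simps)

lemma par4:
  assumes "cmod a = 1"
  shows "cmod (a + z) ^ 4 + cmod (- a + z) ^ 4 \<le> 2 * cmod z ^ 4 + 12 * cmod z ^ 2 + 2"
proof -
  define p where "p = Re a"
  define q where "q = Im a"
  define X where "X = Re z"
  define Y where "Y = Im z"
  have h: "p ^ 2 + q ^ 2 = 1" using assms unfolding p_def q_def by (metis cmod_power2 one_power2)
  define Q where "Q = X^2 + Y^2"
  define R where "R = X * p + Y * q"
  have "cmod (a + z) ^ 2 = (X+p)^2 + (Y+q)^2" unfolding cmod_power2 X_def Y_def p_def q_def by (simp add: add.commute)
  also have "\<dots> = Q + (p^2+q^2) + 2 * R" unfolding Q_def R_def by (simp add: power2_eq_square algebra_simps)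
  finally have 1: "cmod (a + z) ^ 2 = Q + 1 + 2 * R" using h by simp
  have "cmod (- a + z) ^ 2 = (X-p)^2 + (Y-q)^2" unfolding cmod_power2 X_def Y_def p_def q_def by simp
  also have "\<dots> = Q + (p^2+q^2) - 2 * R" unfolding Q_def R_def by (simp add: power2_eq_square algebra_simps)
  finally have 2: "cmod (- a + z) ^ 2 = Q + 1 - 2 * R" using h by simp
  have 3: "cmod z ^ 2 = Q" unfolding cmod_power2 Q_def X_def Y_def by simp
  have "R^2 + (X*q - Y*p)^2 = Q * (p^2+q^2)" unfolding R_def Q_def by (simp add: power2_eq_square algebra_simps)
  then have RQ: "R^2 \<le> Q" using h by (simp add: add_increasing2) (metis le_add_same_cancel1 zero_le_power2)
  have e: "\<And>w::real. w ^ 4 = (w^2)^2" by (simp add: power_mult[symmetric])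
  show ?thesis unfolding e 1 2 3 using RQ by (simp add: power2_eq_square algebra_simps)
qed

lemma SG2: "(\<forall>a\<in>set as. cmod a = 1) \<Longrightarrow> SG (\<lambda>z. cmod z ^ 2) as = 2 ^ length as * length as"
proof (induction as)
  case (Cons a as)
  have "SG (\<lambda>z. cmod z ^ 2) (a # as) = SG (\<lambda>z. 2 * cmod z ^ 2 + 2) as"
    unfolding SG_Cons SG_add[symmetric] using par2[of a] Cons.prems by simp
  also have "\<dots> = 2 * SG (\<lambda>z. cmod z ^ 2) as + 2 * 2 ^ length as"
    by (simp add: SG_add SG_cmult SG_const)
  finally show ?case using Cons by simp
qed simp

lemma SG4: "(\<forall>a\<in>set as. cmod a = 1) \<Longrightarrow> SG (\<lambda>z. cmod z ^ 4) as \<le> 2 ^ length as * (3 * length as ^ 2)"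
proof (induction as)
  case (Cons a as)
  have "SG (\<lambda>z. cmod z ^ 4) (a # as) \<le> SG (\<lambda>z. 2 * cmod z ^ 4 + 12 * cmod z ^ 2 + 2) as"
    unfolding SG_Cons SG_add[symmetric] using par4[of a] Cons.prems by (intro SG_mono) auto
  also have "\<dots> = 2 * SG (\<lambda>z. cmod z ^ 4) as + 12 * SG (\<lambda>z. cmod z ^ 2) as + 2 * 2 ^ length as"
    by (simp add: SG_add SG_cmult SG_const)
  also have "\<dots> \<le> 2 * (2 ^ length as * (3 * length as ^ 2)) + 12 * (2 ^ length as * length as) + 2 * 2 ^ length as"
    using Cons SG2[of as] by simp
  also have "\<dots> \<le> 2 ^ length (a # as) * (3 * length (a # as) ^ 2)"
    by (simp add: power2_eq_square algebra_simps)
  finally show ?case .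
qed simp

lemma pw: fixes x t :: real assumes "x \<ge> 0" "t > 0" shows "x \<ge> x^2 / t - (4/27) * x^4 / t^3"
proof -
  have id: "27 * (x * t^3 - (x^2 * t^2 - (4/27) * x^4)) = x * (2*x - 3*t)^2 * (x + 3 * t)"
    by (simp add: power2_eq_square power3_eq_cube power4_eq_xxxx algebra_simps)
  have "x * (2*x - 3*t)^2 * (x + 3 * t) \<ge> 0" using assms by simp
  then have "27 * (x * t^3 - (x^2 * t^2 - (4/27) * x^4)) \<ge> 0" using id by simp
  then have "x * t^3 - (x^2 * t^2 - (4/27) * x^4) \<ge> 0" by simp
  then have "x^2 * t^2 - (4/27) * x^4 \<le> x * t^3" by simp
  then show ?thesis using assms by (simp add: field_simps power_eq_if)
qed

lemma SG1: assumes "\<forall>a\<in>set as. cmod a = 1" "as \<noteq> []"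
  shows "SG cmod as \<ge> 2 ^ length as * (5/9 * sqrt (length as))"
proof -
  define n where "n = length as"
  define t where "t = sqrt n"
  have n: "n \<ge> 1" using assms(2) by (simp add: n_def Suc_le_eq)
  have t: "t > 0" using n by (simp add: t_def)
  have tt: "t^2 = n" by (simp add: t_def)
  have "SG cmod as \<ge> SG (\<lambda>z. (1/t) * cmod z ^ 2 + (- (4/27) / t^3) * cmod z ^ 4) as"
    by (rule SG_mono) (use pw[OF _ t] in auto)
  moreover have "SG (\<lambda>z. (1/t) * cmod z ^ 2 + (- (4/27) / t^3) * cmod z ^ 4) as
     = (1/t) * (2^n * n) + (- (4/27) / t^3) * SG (\<lambda>z. cmod z ^ 4) as"
    unfolding SG_add SG_cmult SG2[OF assms(1)] n_def by simp
  moreover have "(- (4/27) / t^3) * SG (\<lambda>z. cmod z ^ 4) as \<ge> (- (4/27) / t^3) * (2 ^ n * (3 * n ^ 2))"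
    using SG4[OF assms(1)] t by (intro mult_left_mono_neg) (auto simp: n_def)
  moreover have "(1/t) * (2^n * n) + (- (4/27) / t^3) * (2 ^ n * (3 * n ^ 2)) = 2 ^ n * (5/9 * t)"
    using t by (simp add: of_nat_power flip: tt) (simp add: field_simps power2_eq_square power3_eq_cube power4_eq_xxxx)
  ultimately show ?thesis unfolding n_def t_def by linarith
qed


definition ee :: "nat \<Rightarrow> real \<Rightarrow> complex" where
  "ee L x = cis (2 * pi * x / real L)"

lemma ee_mult: "ee L a * ee L b = ee L (a + b)"
  by (simp add: ee_def cis_mult add_divide_distrib distrib_left)

lemma cnj_ee: "cnj (ee L a) = ee L (- a)"
  by (simp add: ee_def cis_cnj)

lemma norm_ee[simp]: "cmod (ee L a) = 1"
  by (simp add: ee_def)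

lemma ee_zero[simp]: "ee L 0 = 1"
  by (simp add: ee_def)

lemma ortho:
  assumes L: "L \<ge> 1" and d: "\<bar>d\<bar> < int L"
  shows "(\<Sum>k<L. ee L (real k * of_int d)) = (if d = 0 then of_nat L else 0)"
proof (cases "d = 0")
  case True then show ?thesis by simp
next
  case False
  define r where "r = ee L (of_int d)"
  have pk: "ee L (real k * of_int d) = r ^ k" for k
    unfolding r_def ee_def DeMoivre by (simp add: algebra_simps)
  have rL: "r ^ L = 1"
  proof -
    have "real L * (2 * pi * of_int d / real L) = 2 * pi * of_int d" using L by simp
    then show ?thesis unfolding r_def ee_def DeMoivre by simp
  qed
  have r1: "r \<noteq> 1"
  proof
    assume "r = 1"
    then obtain n where n: "2 * pi * of_int d / real L = of_int n * (2 * pi)"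
      unfolding r_def ee_def cis_eq_1_iff by blast
    then have "real_of_int d = of_int n * real L" using L by (simp add: field_simps)
    then have "d = n * int L" by (metis of_int_eq_iff of_int_mult of_int_of_nat_eq)
    then show False using d False
      by (metis abs_mult abs_of_nat mult_cancel_right1 mult_eq_0_iff mult_le_cancel_right2 of_nat_0_le_iff
          linorder_not_less abs_ge_zero zero_less_abs_iff int_one_le_iff_zero_less le_less)
  qed
  have "(\<Sum>k<L. ee L (real k * of_int d)) = (\<Sum>k<L. r ^ k)" by (simp add: pk)
  also have "\<dots> = 0" using r1 rL by (simp add: geometric_sum)
  finally show ?thesis using False by simp
qed

lemma parseval:
  assumes L: "L \<ge> 1" and I: "I \<subseteq> {b0..<b0+L}"
  shows "(\<Sum>k<L. cmod (\<Sum>j\<in>I. x j * ee L (- (real k * real j))) ^ 2) = real L * (\<Sum>j\<in>I. cmod (x j) ^ 2)"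
proof -
  have fin: "finite I" using I finite_subset by blast
  have "complex_of_real (\<Sum>k<L. cmod (\<Sum>j\<in>I. x j * ee L (- (real k * real j))) ^ 2)
     = (\<Sum>k<L. (\<Sum>j\<in>I. x j * ee L (- (real k * real j))) * cnj (\<Sum>j\<in>I. x j * ee L (- (real k * real j))))"
    by (simp only: of_real_sum complex_norm_square)
  also have "\<dots> = (\<Sum>k<L. \<Sum>j\<in>I. \<Sum>j'\<in>I. x j * cnj (x j') * ee L (real k * of_int (int j' - int j)))"
    by (simp add: sum_distrib_left sum_distrib_right cnj_ee ee_mult algebra_simps) (rule sum.cong[OF refl], rule sum.swap)
  also have "\<dots> = (\<Sum>j\<in>I. \<Sum>j'\<in>I. x j * cnj (x j') * (\<Sum>k<L. ee L (real k * of_int (int j' - int j))))"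
    by (simp add: sum_distrib_left sum.swap[of _ "{..<L}"] sum.swap[of _ "{..<L}" I])
  also have "\<dots> = (\<Sum>j\<in>I. \<Sum>j'\<in>I. x j * cnj (x j') * (if j' = j then of_nat L else 0))"
  proof (intro sum.cong refl)
    fix j j' assume "j \<in> I" "j' \<in> I"
    then have "j \<in> {b0..<b0+L}" "j' \<in> {b0..<b0+L}" using I by auto
    then have "\<bar>int j' - int j\<bar> < int L" by auto
    then show "x j * cnj (x j') * (\<Sum>k<L. ee L (real k * of_int (int j' - int j))) =
         x j * cnj (x j') * (if j' = j then of_nat L else 0)"
      using ortho[OF L, of "int j' - int j"] by (simp del: of_int_diff)
  qed
  also have "\<dots> = (\<Sum>j\<in>I. x j * cnj (x j) * of_nat L)"
    using fin by (simp add: if_distrib[of "\<lambda>t. _ * t"] sum.delta cong: if_cong)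
  also have "\<dots> = complex_of_real (real L * (\<Sum>j\<in>I. cmod (x j) ^ 2))"
    by (simp only: of_real_mult of_real_sum complex_norm_square sum_distrib_left of_real_of_nat_eq) (simp add: mult.commute)
  finally show ?thesis using of_real_eq_iff by blast
qed


definition Tm :: "nat \<Rightarrow> nat \<Rightarrow> (nat \<Rightarrow> complex) \<Rightarrow> nat \<Rightarrow> nat \<Rightarrow> complex" where
  "Tm L b0 u i j = (if b0 \<le> i \<and> i < b0 + L \<and> b0 \<le> j \<and> j < b0 + L
     then (\<Sum>k<L. u k * ee L (real k * (real i - real j))) / of_nat L else 0)"

lemma CS_sqrt:
  fixes a b :: "'a \<Rightarrow> real"
  shows "(\<Sum>i\<in>I. a i * b i) \<le> sqrt (\<Sum>i\<in>I. (a i)\<^sup>2) * sqrt (\<Sum>i\<in>I. (b i)\<^sup>2)"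
proof -
  have "(\<Sum>i\<in>I. a i * b i) \<le> sqrt ((\<Sum>i\<in>I. (a i)\<^sup>2) * (\<Sum>i\<in>I. (b i)\<^sup>2))"
    by (rule real_le_rsqrt) (rule Cauchy_Schwarz_ineq_sum)
  then show ?thesis by (simp add: real_sqrt_mult)
qed

lemma mat_norm_leI:
  assumes "\<And>n x y. (\<Sum>i<n. (cmod (x i))^2) \<le> 1 \<Longrightarrow> (\<Sum>i<n. (cmod (y i))^2) \<le> 1 \<Longrightarrow>
      cmod (\<Sum>i<n. \<Sum>j<n. cnj (y i) * A i j * x j) \<le> c"
  shows "mat_norm A \<le> ereal c"
  unfolding mat_norm_def
  by (intro SUP_least) (use assms in auto)

lemma mat_norm_geI:
  assumes "(\<Sum>i<n. (cmod (x i))^2) \<le> 1" "(\<Sum>i<n. (cmod (y i))^2) \<le> 1"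
  shows "ereal (cmod (\<Sum>i<n. \<Sum>j<n. cnj (y i) * A i j * x j)) \<le> mat_norm A"
  unfolding mat_norm_def
  by (rule SUP_upper2[of n], simp, rule SUP_upper2[of "(x, y)"]) (use assms in auto)

lemma mat_norm_le_D:
  assumes "mat_norm A \<le> 1" "(\<Sum>i<n. (cmod (x i))^2) \<le> 1" "(\<Sum>i<n. (cmod (y i))^2) \<le> 1"
  shows "cmod (\<Sum>i<n. \<Sum>j<n. cnj (y i) * A i j * x j) \<le> 1"
  using order.trans[OF mat_norm_geI[OF assms(2,3), of A] assms(1)] by simp

lemma sum_restrict:
  assumes "finite T" "S \<subseteq> T" "\<And>i. i \<in> T \<Longrightarrow> i \<notin> S \<Longrightarrow> g i = 0"
  shows "sum g T = sum g S"
  using assms by (intro sum.mono_neutral_right) auto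

lemma Tm_contr:
  assumes L: "L \<ge> 1" and u: "\<And>k. cmod (u k) \<le> 1"
  shows "mat_norm (Tm L b0 u) \<le> 1"
proof -
  have "mat_norm (Tm L b0 u) \<le> ereal 1"
  proof (rule mat_norm_leI)
    fix n and x y :: "nat \<Rightarrow> complex"
    assume x: "(\<Sum>i<n. (cmod (x i))^2) \<le> 1" and y: "(\<Sum>i<n. (cmod (y i))^2) \<le> 1"
    define I where "I = {i. i < n \<and> b0 \<le> i \<and> i < b0 + L}"
    have IB: "I \<subseteq> {b0..<b0+L}" and In: "I \<subseteq> {..<n}" and finI: "finite I" unfolding I_def by auto
    define e where "e = (\<lambda>k i j. ee L (real k * (real i - real j)))"
    define Yc where "Yc = (\<lambda>k. \<Sum>i\<in>I. cnj (y i) * ee L (real k * real i))"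
    define Xk where "Xk = (\<lambda>k. \<Sum>j\<in>I. x j * ee L (- (real k * real j)))"
    have "(\<Sum>i<n. \<Sum>j<n. cnj (y i) * Tm L b0 u i j * x j)
        = (\<Sum>i\<in>I. \<Sum>j\<in>I. cnj (y i) * ((\<Sum>k<L. u k * e k i j) / of_nat L) * x j)"
    proof -
      have "(\<Sum>i<n. \<Sum>j<n. cnj (y i) * Tm L b0 u i j * x j) = (\<Sum>i\<in>I. \<Sum>j<n. cnj (y i) * Tm L b0 u i j * x j)"
        by (rule sum_restrict) (use In in \<open>auto simp: I_def Tm_def\<close>)
      also have "\<dots> = (\<Sum>i\<in>I. \<Sum>j\<in>I. cnj (y i) * Tm L b0 u i j * x j)"
        by (rule sum.cong[OF refl], rule sum_restrict) (use In in \<open>auto simp: I_def Tm_def\<close>)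
      also have "\<dots> = (\<Sum>i\<in>I. \<Sum>j\<in>I. cnj (y i) * ((\<Sum>k<L. u k * e k i j) / of_nat L) * x j)"
        by (intro sum.cong refl) (auto simp: I_def Tm_def e_def)
      finally show ?thesis .
    qed
    also have "\<dots> = (\<Sum>k<L. u k * Yc k * Xk k) / of_nat L"
    proof -
      have eij: "e k i j = ee L (real k * real i) * ee L (- (real k * real j))" for k i j
        unfolding e_def ee_mult by (simp add: algebra_simps)
      have "(\<Sum>i\<in>I. \<Sum>j\<in>I. cnj (y i) * ((\<Sum>k<L. u k * e k i j) / of_nat L) * x j)
          = (\<Sum>i\<in>I. \<Sum>j\<in>I. \<Sum>k<L. u k * (cnj (y i) * ee L (real k * real i)) * (x j * ee L (- (real k * real j))) / of_nat L)"
        by (simp add: eij sum_distrib_left sum_distrib_right sum_divide_distrib algebra_simps)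
      also have "\<dots> = (\<Sum>k<L. \<Sum>i\<in>I. \<Sum>j\<in>I. u k * (cnj (y i) * ee L (real k * real i)) * (x j * ee L (- (real k * real j))) / of_nat L)"
        by (simp add: sum.swap[of _ I "{..<L}"] sum.swap[of _ _ "{..<L}"])
      also have "\<dots> = (\<Sum>k<L. u k * Yc k * Xk k / of_nat L)"
      proof (rule sum.cong[OF refl])
        fix k
        have "u k * Yc k * Xk k / of_nat L = (u k / of_nat L) * (Yc k * Xk k)" by simp
        also have "\<dots> = (u k / of_nat L) * (\<Sum>i\<in>I. \<Sum>j\<in>I. (cnj (y i) * ee L (real k * real i)) * (x j * ee L (- (real k * real j))))"
          unfolding Yc_def Xk_def sum_product ..
        also have "\<dots> = (\<Sum>i\<in>I. \<Sum>j\<in>I. u k * (cnj (y i) * ee L (real k * real i)) * (x j * ee L (- (real k * real j))) / of_nat L)"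
          by (simp add: sum_distrib_left) (simp only: mult.assoc)
        finally show "(\<Sum>i\<in>I. \<Sum>j\<in>I. u k * (cnj (y i) * ee L (real k * real i)) * (x j * ee L (- (real k * real j))) / of_nat L) = u k * Yc k * Xk k / of_nat L" by simp
      qed
      also have "\<dots> = (\<Sum>k<L. u k * Yc k * Xk k) / of_nat L"
        by (simp add: sum_divide_distrib)
      finally show ?thesis .
    qed
    finally have eq: "(\<Sum>i<n. \<Sum>j<n. cnj (y i) * Tm L b0 u i j * x j) = (\<Sum>k<L. u k * Yc k * Xk k) / of_nat L" .
    have "cmod ((\<Sum>k<L. u k * Yc k * Xk k) / of_nat L) \<le> (\<Sum>k<L. cmod (Yc k) * cmod (Xk k)) / real L"
    proof -
      have "cmod (\<Sum>k<L. u k * Yc k * Xk k) \<le> (\<Sum>k<L. cmod (u k * Yc k * Xk k))" by (rule norm_sum)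
      also have "\<dots> \<le> (\<Sum>k<L. cmod (Yc k) * cmod (Xk k))"
        by (intro sum_mono) (simp add: norm_mult mult_left_le_one_le u mult.assoc)
      finally show ?thesis by (simp add: norm_divide divide_right_mono)
    qed
    also have "\<dots> \<le> sqrt (\<Sum>k<L. cmod (Yc k) ^ 2) * sqrt (\<Sum>k<L. cmod (Xk k) ^ 2) / real L"
      by (rule divide_right_mono[OF CS_sqrt]) simp
    also have "\<dots> \<le> sqrt (real L) * sqrt (real L) / real L"
    proof -
      have cY: "cmod (Yc k) = cmod (\<Sum>i\<in>I. y i * ee L (- (real k * real i)))" for k
      proof -
        have "cnj (Yc k) = (\<Sum>i\<in>I. y i * ee L (- (real k * real i)))"
          by (simp add: Yc_def cnj_ee)
        then show ?thesis by (metis complex_mod_cnj)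
      qed
      have sY: "(\<Sum>k<L. cmod (Yc k) ^ 2) \<le> real L"
      proof -
        have e1: "(\<Sum>k<L. cmod (Yc k) ^ 2) = real L * (\<Sum>j\<in>I. cmod (y j) ^ 2)"
          unfolding cY by (rule parseval[OF L IB])
        have e2: "(\<Sum>j\<in>I. cmod (y j) ^ 2) \<le> 1"
          by (rule order_trans[OF sum_mono2 y]) (use In in auto)
        show ?thesis using e1 mult_left_mono[OF e2, of "real L"] by simp
      qed
      have sX: "(\<Sum>k<L. cmod (Xk k) ^ 2) \<le> real L"
      proof -
        have e1: "(\<Sum>k<L. cmod (Xk k) ^ 2) = real L * (\<Sum>j\<in>I. cmod (x j) ^ 2)"
          unfolding Xk_def by (rule parseval[OF L IB])
        have e2: "(\<Sum>j\<in>I. cmod (x j) ^ 2) \<le> 1"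
          by (rule order_trans[OF sum_mono2 x]) (use In in auto)
        show ?thesis using e1 mult_left_mono[OF e2, of "real L"] by simp
      qed
      show ?thesis
        by (rule divide_right_mono, rule mult_mono, rule real_sqrt_le_mono[OF sY], rule real_sqrt_le_mono[OF sX]) (auto intro: sum_nonneg)
    qed
    also have "\<dots> = 1" using L by simp
    finally show "cmod (\<Sum>i<n. \<Sum>j<n. cnj (y i) * Tm L b0 u i j * x j) \<le> 1" unfolding eq .
  qed
  then show ?thesis by (simp add: one_ereal_def)
qed


lemma bilin:
  assumes T: "mat_norm T \<le> 1"
  shows "cmod (\<Sum>i<n. \<Sum>j<n. cnj (y i) * T i j * x j)
     \<le> sqrt (\<Sum>i<n. (cmod (x i))^2) * sqrt (\<Sum>i<n. (cmod (y i))^2)"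
proof -
  define a where "a = sqrt (\<Sum>i<n. (cmod (x i))^2)"
  define b where "b = sqrt (\<Sum>i<n. (cmod (y i))^2)"
  show ?thesis
  proof (cases "a = 0 \<or> b = 0")
    case True
    then have "(\<forall>i<n. x i = 0) \<or> (\<forall>i<n. y i = 0)"
      unfolding a_def b_def by (auto simp: sum_nonneg_eq_0_iff)
    then have "(\<Sum>i<n. \<Sum>j<n. cnj (y i) * T i j * x j) = 0" by auto
    then show ?thesis by (simp add: sum_nonneg)
  next
    case False
    then have a: "a > 0" and b: "b > 0" unfolding a_def b_def
      by (auto intro!: sum_nonneg simp: less_le)
    define x' where "x' = (\<lambda>i. x i / of_real a)"
    define y' where "y' = (\<lambda>i. y i / of_real b)"
    have nx: "(\<Sum>i<n. (cmod (x' i))^2) \<le> 1"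
    proof -
      have "(\<Sum>i<n. (cmod (x' i))^2) = (\<Sum>i<n. (cmod (x i))^2) / a^2"
        by (simp add: x'_def norm_divide power_divide sum_divide_distrib)
      also have "\<dots> = 1" using a unfolding a_def
        by (simp add: sum_nonneg)
      finally show ?thesis by simp
    qed
    have ny: "(\<Sum>i<n. (cmod (y' i))^2) \<le> 1"
    proof -
      have "(\<Sum>i<n. (cmod (y' i))^2) = (\<Sum>i<n. (cmod (y i))^2) / b^2"
        by (simp add: y'_def norm_divide power_divide sum_divide_distrib)
      also have "\<dots> = 1" using b unfolding b_def
        by (simp add: sum_nonneg)
      finally show ?thesis by simp
    qed
    have "(\<Sum>i<n. \<Sum>j<n. cnj (y' i) * T i j * x' j) = (\<Sum>i<n. \<Sum>j<n. cnj (y i) * T i j * x j) / (of_real a * of_real b)"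
      by (simp add: x'_def y'_def sum_divide_distrib ac_simps)
    then have "cmod (\<Sum>i<n. \<Sum>j<n. cnj (y i) * T i j * x j) / (a * b) \<le> 1"
      using mat_norm_le_D[OF T nx ny] a b by (simp add: norm_divide norm_mult)
    then show ?thesis using a b unfolding a_def b_def by (simp add: field_simps)
  qed
qed

lemma column:
  assumes T: "mat_norm T \<le> 1" and j: "j < n"
  shows "cmod (\<Sum>i<n. w i * T i j) \<le> sqrt (\<Sum>i<n. (cmod (w i))^2)"
proof -
  define x where "x = (\<lambda>l. if l = j then (1::complex) else 0)"
  have "(\<Sum>i<n. \<Sum>l<n. cnj (cnj (w i)) * T i l * x l) = (\<Sum>i<n. w i * T i j)"
    using j by (simp add: x_def if_distrib[of "\<lambda>t. _ * t"] cong: if_cong)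
  moreover have "(\<Sum>i<n. (cmod (x i))^2) = 1"
    using j by (simp add: x_def if_distrib[of "\<lambda>t. (cmod t)^2"] cong: if_cong)
  ultimately show ?thesis using bilin[OF T, where n=n and y="\<lambda>i. cnj (w i)" and x=x] by simp
qed

lemma row_card:
  assumes "finite S" "X \<in> schur_class (toeplitz_pattern S)"
  shows "(\<Sum>j<n. (cmod (X i j))^2) \<le> real (card S)"
proof -
  have "(\<Sum>j<n. (cmod (X i j))^2) \<le> (\<Sum>j<n. if int i - int j \<in> S then 1 else 0)"
  proof (rule sum_mono)
    fix j
    have "cmod (X i j) \<le> 1" using assms(2) by (simp add: schur_class_def)
    then have "(cmod (X i j))^2 \<le> 1" by (simp add: power_le_one)
    moreover have "int i - int j \<notin> S \<Longrightarrow> X i j = 0"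
      using assms(2) by (simp add: schur_class_def toeplitz_pattern_def)
    ultimately show "(cmod (X i j))^2 \<le> (if int i - int j \<in> S then 1 else 0)" by auto
  qed
  also have "\<dots> = real (card ({..<n} \<inter> {j. int i - int j \<in> S}))"
    by (simp add: sum.If_cases)
  also have "card ({..<n} \<inter> {j. int i - int j \<in> S}) \<le> card S"
    by (rule card_inj_on_le[where f = "\<lambda>j. int i - int j"]) (auto simp: inj_on_def assms(1))
  finally show ?thesis by simp
qed

lemma upper:
  assumes S: "finite S" and X: "X \<in> schur_class (toeplitz_pattern S)"
  shows "schur_norm X \<le> ereal (sqrt (real (card S)))"
  unfolding schur_norm_def
proof (rule SUP_least)
  fix T assume "T \<in> {T. mat_norm T \<le> 1}"
  then have T: "mat_norm T \<le> 1" by simp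
  show "mat_norm (\<lambda>i j. X i j * T i j) \<le> ereal (sqrt (real (card S)))"
  proof (rule mat_norm_leI)
    fix n and x y :: "nat \<Rightarrow> complex"
    assume x: "(\<Sum>i<n. (cmod (x i))^2) \<le> 1" and y: "(\<Sum>i<n. (cmod (y i))^2) \<le> 1"
    define m where "m = real (card S)"
    define c where "c = (\<lambda>j. sqrt (\<Sum>i<n. (cmod (y i))^2 * (cmod (X i j))^2))"
    have "(\<Sum>i<n. \<Sum>j<n. cnj (y i) * (X i j * T i j) * x j) = (\<Sum>j<n. x j * (\<Sum>i<n. (cnj (y i) * X i j) * T i j))"
      by (subst sum.swap) (simp add: sum_distrib_left algebra_simps)
    then have "cmod (\<Sum>i<n. \<Sum>j<n. cnj (y i) * (X i j * T i j) * x j) = cmod (\<Sum>j<n. x j * (\<Sum>i<n. (cnj (y i) * X i j) * T i j))"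
      by simp
    also have "\<dots> \<le> (\<Sum>j<n. cmod (x j) * cmod (\<Sum>i<n. (cnj (y i) * X i j) * T i j))"
      by (rule order_trans[OF norm_sum]) (simp add: norm_mult)
    also have "\<dots> \<le> (\<Sum>j<n. cmod (x j) * c j)"
    proof (rule sum_mono)
      fix j assume "j \<in> {..<n}"
      then have "cmod (\<Sum>i<n. (cnj (y i) * X i j) * T i j) \<le> c j"
        using column[OF T, of j n "\<lambda>i. cnj (y i) * X i j"] by (simp add: c_def norm_mult power_mult_distrib)
      then show "cmod (x j) * cmod (\<Sum>i<n. (cnj (y i) * X i j) * T i j) \<le> cmod (x j) * c j"
        by (simp add: mult_left_mono)
    qed
    also have "\<dots> \<le> sqrt (\<Sum>j<n. (cmod (x j))^2) * sqrt (\<Sum>j<n. (c j)^2)"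
      by (rule CS_sqrt)
    also have "\<dots> \<le> 1 * sqrt (\<Sum>j<n. (c j)^2)"
      by (rule mult_right_mono[OF _ real_sqrt_ge_zero[OF sum_nonneg]]) (use x in auto)
    also have "(\<Sum>j<n. (c j)^2) = (\<Sum>i<n. (cmod (y i))^2 * (\<Sum>j<n. (cmod (X i j))^2))"
      by (simp add: c_def sum_nonneg sum_distrib_left) (rule sum.swap)
    also have "\<dots> \<le> (\<Sum>i<n. (cmod (y i))^2 * m)"
      by (intro sum_mono mult_left_mono) (auto simp: m_def row_card[OF S X])
    also have "\<dots> \<le> m"
      using mult_right_mono[OF y, of m] by (simp add: m_def sum_distrib_right)
    finally show "cmod (\<Sum>i<n. \<Sum>j<n. cnj (y i) * (X i j * T i j) * x j) \<le> sqrt (real (card S))"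
      unfolding m_def by simp
  qed
qed


definition phi :: "int list \<Rightarrow> real list \<Rightarrow> int \<Rightarrow> complex" where
  "phi sl e t = (case map_of (zip sl e) t of Some v \<Rightarrow> complex_of_real v | None \<Rightarrow> 0)"

lemma zs_map: "distinct sl \<Longrightarrow> length e = length sl \<Longrightarrow> zs e (map h sl) = (\<Sum>t\<in>set sl. phi sl e t * h t)"
proof (induction sl arbitrary: e)
  case Nil then show ?case by simp
next
  case (Cons s sl)
  then obtain v e' where e: "e = v # e'" and le: "length e' = length sl" by (cases e) auto
  have "zs e (map h (s # sl)) = of_real v * h s + (\<Sum>t\<in>set sl. phi sl e' t * h t)"
    using Cons le by (simp add: e)
  also have "(\<Sum>t\<in>set sl. phi sl e' t * h t) = (\<Sum>t\<in>set sl. phi (s # sl) e t * h t)"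
    using Cons.prems by (intro sum.cong refl) (auto simp: phi_def e)
  finally show ?case using Cons.prems by (simp add: e phi_def)
qed

lemma phi_bound: "set e \<subseteq> {1, -1} \<Longrightarrow> cmod (phi sl e t) \<le> 1"
  unfolding phi_def
  by (auto split: option.splits dest!: map_of_SomeD set_zip_rightD)

lemma sum_list_sum_swap: "sum_list (map (\<lambda>e. \<Sum>k\<in>K. f k e) xs) = (\<Sum>k\<in>K. sum_list (map (f k) xs))"
  by (induction xs) (auto simp: sum.distrib)

lemma exists_ge: "xs \<noteq> [] \<Longrightarrow> sum_list (map F xs) \<ge> real (length xs) * t \<Longrightarrow> \<exists>x\<in>set xs. F x \<ge> t"
proof (induction xs)
  case Nil then show ?case by simp
next
  case (Cons a xs)
  show ?case
  proof (cases "F a \<ge> t")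
    case True then show ?thesis by simp
  next
    case False
    show ?thesis
    proof (cases "xs = []")
      case True then show ?thesis using Cons.prems False by simp
    next
      case xs: False
      have "sum_list (map F xs) \<ge> real (length xs) * t"
        using Cons.prems False by (simp add: algebra_simps)
      then show ?thesis using Cons.IH[OF xs] by auto
    qed
  qed
qed

lemma signs_exist:
  assumes S: "finite S" "S \<noteq> {}" and L: "L \<ge> 1"
  shows "\<exists>\<phi>. (\<forall>s. cmod (\<phi> s) \<le> 1) \<and>
     real L * (5/9 * sqrt (real (card S))) \<le> (\<Sum>k<L. cmod (\<Sum>s\<in>S. \<phi> s * ee L (real k * of_int s)))"
proof -
  define sl where "sl = sorted_list_of_set S"
  define m where "m = card S"
  have sl: "distinct sl" "set sl = S" "length sl = m" using S by (auto simp: sl_def m_def)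
  define as where "as = (\<lambda>k. map (\<lambda>s. ee L (real k * of_int s)) sl)"
  have las: "length (as k) = m" for k by (simp add: as_def sl)
  have asne: "as k \<noteq> []" for k using S sl by (auto simp: as_def)
  define c where "c = 5/9 * sqrt (real m)"
  have A: "SG cmod (as k) \<ge> 2 ^ m * c" for k
    using SG1[of "as k"] asne las by (auto simp: as_def c_def)
  define F where "F = (\<lambda>e. \<Sum>k<L. cmod (zs e (as k)))"
  have "sum_list (map F (sgns m)) = (\<Sum>k<L. SG cmod (as k))"
    unfolding F_def sum_list_sum_swap SG_def las by (simp add: o_def)
  also have "\<dots> \<ge> (\<Sum>k<L. 2 ^ m * c)" by (intro sum_mono A)
  finally have "sum_list (map F (sgns m)) \<ge> real (length (sgns m)) * (real L * c)" by (simp add: ac_simps)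
  moreover have "sgns m \<noteq> []"
    using length_sgns[of m] by (metis list.size(3) power_not_zero zero_neq_numeral)
  ultimately obtain e where e: "e \<in> set (sgns m)" "F e \<ge> real L * c"
    using exists_ge by blast
  have le: "length e = length sl" and se: "set e \<subseteq> {1, -1}" using sgns_props[OF e(1)] sl by auto
  have "zs e (as k) = (\<Sum>s\<in>S. phi sl e s * ee L (real k * of_int s))" for k
    unfolding as_def zs_map[OF sl(1) le] sl(2) ..
  then show ?thesis using e(2) phi_bound[OF se]
    by (intro exI[of _ "phi sl e"]) (simp add: F_def c_def m_def)
qed


lemma reindex_diag:
  fixes g :: "int \<Rightarrow> complex"
  assumes fS: "finite S"
  shows "(\<Sum>j\<in>{b0..<b0+L}. if int i - int j \<in> S then g (int i - int j) else 0)
       = (\<Sum>s\<in>S. if int b0 \<le> int i - s \<and> int i - s < int b0 + int L then g s else 0)"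
proof -
  have "(\<Sum>j\<in>{b0..<b0+L}. if int i - int j \<in> S then g (int i - int j) else 0)
      = (\<Sum>j\<in>{j\<in>{b0..<b0+L}. int i - int j \<in> S}. g (int i - int j))"
    by (rule sum.inter_filter[symmetric]) simp
  also have "\<dots> = (\<Sum>s\<in>{s\<in>S. int b0 \<le> int i - s \<and> int i - s < int b0 + int L}. g s)"
    by (rule sum.reindex_bij_witness[where i = "\<lambda>s. nat (int i - s)" and j = "\<lambda>j. int i - int j"]) auto
  also have "\<dots> = (\<Sum>s\<in>S. if int b0 \<le> int i - s \<and> int i - s < int b0 + int L then g s else 0)"
    by (rule sum.inter_filter) (rule fS)
  finally show ?thesis .
qed

lemma bad_card:
  "card {i\<in>{b0..<b0+L}. \<not> (int b0 \<le> int i - s \<and> int i - s < int b0 + int L)} \<le> nat \<bar>s\<bar>"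
proof -
  have "{i\<in>{b0..<b0+L}. \<not> (int b0 \<le> int i - s \<and> int i - s < int b0 + int L)}
      \<subseteq> {b0..<b0 + nat s} \<union> {b0 + L - nat (- s)..<b0+L}"
    by auto
  then have "card {i\<in>{b0..<b0+L}. \<not> (int b0 \<le> int i - s \<and> int i - s < int b0 + int L)}
      \<le> card ({b0..<b0 + nat s} \<union> {b0 + L - nat (- s)..<b0+L})"
    by (intro card_mono) auto
  also have "\<dots> \<le> card {b0..<b0 + nat s} + card {b0 + L - nat (- s)..<b0+L}"
    by (rule card_Un_le)
  also have "\<dots> \<le> nat \<bar>s\<bar>" by auto
  finally show ?thesis .
qed

lemma witness:
  assumes fS: "finite S" and ne: "S \<noteq> {}"
  shows "\<exists>L\<ge>1. \<forall>b0. \<exists>X T.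
     (\<forall>i j. X i j \<noteq> 0 \<longrightarrow> int i - int j \<in> S \<and> b0 \<le> i \<and> i < b0 + L) \<and>
     (\<forall>i j. cmod (X i j) \<le> 1) \<and>
     (\<forall>i j. T i j \<noteq> 0 \<longrightarrow> b0 \<le> i \<and> i < b0 + L) \<and>
     mat_norm T \<le> 1 \<and>
     ereal (sqrt (real (card S)) / 4) \<le> mat_norm (\<lambda>i j. X i j * T i j)"
proof -
  define W where "W = (\<Sum>s\<in>S. nat \<bar>s\<bar>)"
  define L where "L = 4 * W + 1"
  have L1: "L \<ge> 1" by (simp add: L_def)
  define m where "m = card S"
  have m1: "m \<ge> 1" using fS ne by (simp add: m_def Suc_le_eq card_gt_0_iff)
  obtain \<phi> where \<phi>1: "\<And>s. cmod (\<phi> s) \<le> 1"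
    and \<phi>2: "real L * (5/9 * sqrt (real m)) \<le> (\<Sum>k<L. cmod (\<Sum>s\<in>S. \<phi> s * ee L (real k * of_int s)))"
    using signs_exist[OF fS ne L1] unfolding m_def by blast
  define f where "f = (\<lambda>k. \<Sum>s\<in>S. \<phi> s * ee L (real k * of_int s))"
  define u where "u = (\<lambda>k. if f k = 0 then 0 else cnj (f k) / of_real (cmod (f k)))"
  have u1: "cmod (u k) \<le> 1" for k by (simp add: u_def norm_divide)
  have uf: "u k * f k = of_real (cmod (f k))" for k
  proof (cases "f k = 0")
    case False
    have "u k * f k = (f k * cnj (f k)) / of_real (cmod (f k))" by (simp add: u_def False)
    also have "\<dots> = of_real (cmod (f k) ^ 2) / of_real (cmod (f k))" by (simp only: complex_norm_square)
    also have "\<dots> = of_real (cmod (f k))" using False by (simp add: power2_eq_square)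
    finally show ?thesis .
  qed (simp add: u_def)
  show ?thesis
  proof (intro exI[of _ L] conjI allI L1)
    fix b0
    define B where "B = {b0..<b0+L}"
    define X where "X = (\<lambda>i j. if i \<in> B \<and> j \<in> B \<and> int i - int j \<in> S then \<phi> (int i - int j) else 0)"
    define T where "T = Tm L b0 u"
    have T1: "mat_norm T \<le> 1" unfolding T_def by (rule Tm_contr[OF L1 u1])
    have lowb: "ereal (sqrt (real (card S)) / 4) \<le> mat_norm (\<lambda>i j. X i j * T i j)"
    proof -
      define v where "v = (\<lambda>i::nat. if b0 \<le> i then complex_of_real (1 / sqrt (real L)) else 0)"
      have nv: "(\<Sum>i<b0+L. (cmod (v i))^2) \<le> 1"
      proof -
        have "(\<Sum>i<b0+L. (cmod (v i))^2) = (\<Sum>i\<in>B. (cmod (v i))^2)"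
          by (rule sum_restrict) (auto simp: B_def v_def)
        also have "\<dots> = (\<Sum>i\<in>B. 1 / real L)" by (intro sum.cong refl) (auto simp: B_def v_def power_divide norm_divide)
        also have "\<dots> = 1" using L1 by (simp add: B_def)
        finally show ?thesis by simp
      qed
      have sq: "(1 / complex_of_real (sqrt (real L)))^2 = 1 / of_nat L"
      proof -
        have "(1 / complex_of_real (sqrt (real L)))^2 = 1 / complex_of_real ((sqrt (real L))^2)"
          by (simp add: power_divide del: of_real_power add: of_real_power[symmetric])
        then show ?thesis by simp
      qed
      define V where "V = (\<Sum>i<b0+L. \<Sum>j<b0+L. cnj (v i) * (X i j * T i j) * v j)"
      define a where "a = (\<lambda>k s. \<phi> s * ee L (real k * of_int s))"
      define cnd where "cnd = (\<lambda>i s. int b0 \<le> int i - s \<and> int i - s < int b0 + int L)"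
      define E where "E = (\<lambda>k. \<Sum>i\<in>B. \<Sum>s\<in>S. if cnd i s then 0 else a k s)"
      have V1: "V = (\<Sum>i\<in>B. \<Sum>j\<in>B. X i j * T i j / of_nat L)"
      proof -
        have "V = (\<Sum>i\<in>B. \<Sum>j<b0+L. cnj (v i) * (X i j * T i j) * v j)"
          unfolding V_def by (rule sum_restrict) (auto simp: B_def X_def)
        also have "\<dots> = (\<Sum>i\<in>B. \<Sum>j\<in>B. cnj (v i) * (X i j * T i j) * v j)"
          by (rule sum.cong[OF refl], rule sum_restrict) (auto simp: B_def X_def)
        also have "\<dots> = (\<Sum>i\<in>B. \<Sum>j\<in>B. X i j * T i j / of_nat L)"
        proof (intro sum.cong refl)
          fix i j assume "i \<in> B" "j \<in> B"
          then have "cnj (v i) * v j = 1 / of_nat L" using L1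
            using sq by (auto simp: B_def v_def power2_eq_square[symmetric])
          then show "cnj (v i) * (X i j * T i j) * v j = X i j * T i j / of_nat L"
            by (metis (no_types, lifting) mult.commute mult.left_commute times_divide_eq_right mult_1_right)
        qed
        finally show ?thesis .
      qed
      have V2: "V = (\<Sum>k<L. u k * (\<Sum>i\<in>B. \<Sum>s\<in>S. if cnd i s then a k s else 0)) / (of_nat L)^2"
      proof -
        have "X i j * T i j / of_nat L = (\<Sum>k<L. u k * (if int i - int j \<in> S then a k (int i - int j) else 0)) / (of_nat L)^2"
          if "i \<in> B" "j \<in> B" for i j
          using that by (auto simp: X_def T_def Tm_def B_def a_def sum_distrib_left sum_divide_distrib power2_eq_square ac_simps)
        then have "V = (\<Sum>i\<in>B. \<Sum>j\<in>B. (\<Sum>k<L. u k * (if int i - int j \<in> S then a k (int i - int j) else 0)) / (of_nat L)^2)"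
          unfolding V1 by (intro sum.cong refl) auto
        also have "\<dots> = (\<Sum>k<L. u k * (\<Sum>i\<in>B. \<Sum>j\<in>B. if int i - int j \<in> S then a k (int i - int j) else 0)) / (of_nat L)^2"
          by (simp add: sum_divide_distrib sum_distrib_left sum.swap[of _ B "{..<L}"] sum.swap[of _ _ "{..<L}"])
        also have "\<dots> = (\<Sum>k<L. u k * (\<Sum>i\<in>B. \<Sum>s\<in>S. if cnd i s then a k s else 0)) / (of_nat L)^2"
          unfolding B_def cnd_def reindex_diag[OF fS] ..
        finally show ?thesis .
      qed
      have G: "(\<Sum>i\<in>B. \<Sum>s\<in>S. if cnd i s then a k s else 0) = of_nat L * f k - E k" for k
      proof -
        have "(\<Sum>i\<in>B. \<Sum>s\<in>S. if cnd i s then a k s else 0) = (\<Sum>i\<in>B. \<Sum>s\<in>S. a k s - (if cnd i s then 0 else a k s))"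
          by (intro sum.cong refl) auto
        also have "\<dots> = (\<Sum>i\<in>B. f k) - E k"
          by (simp add: sum_subtractf E_def f_def a_def)
        finally show ?thesis by (simp add: B_def)
      qed
      have Eb: "cmod (E k) \<le> real W" for k
      proof -
        have "cmod (E k) \<le> (\<Sum>i\<in>B. \<Sum>s\<in>S. cmod (if cnd i s then 0 else a k s))"
          unfolding E_def by (rule order_trans[OF norm_sum sum_mono[OF norm_sum]])
        also have "\<dots> \<le> (\<Sum>i\<in>B. \<Sum>s\<in>S. if cnd i s then 0 else 1)"
          by (intro sum_mono) (auto simp: a_def norm_mult \<phi>1)
        also have "\<dots> = (\<Sum>s\<in>S. \<Sum>i\<in>B. if cnd i s then 0 else 1)"
          by (rule sum.swap)
        also have "\<dots> = (\<Sum>s\<in>S. real (card {i\<in>B. \<not> cnd i s}))"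
        proof (intro sum.cong refl)
          fix s
          have "real (card {i\<in>B. \<not> cnd i s}) = (\<Sum>i\<in>{i\<in>B. \<not> cnd i s}. 1)" by simp
          also have "\<dots> = (\<Sum>i\<in>B. if \<not> cnd i s then 1 else 0)"
            by (rule sum.inter_filter) (simp add: B_def)
          finally show "(\<Sum>i\<in>B. if cnd i s then 0 else 1) = real (card {i\<in>B. \<not> cnd i s})"
            by (simp add: if_not_P if_P cong: if_cong) (intro sum.cong refl, auto)
        qed
        also have "\<dots> \<le> (\<Sum>s\<in>S. real (nat \<bar>s\<bar>))"
        proof (intro sum_mono)
          fix s
          have "card {i\<in>B. \<not> cnd i s} \<le> nat \<bar>s\<bar>"
            unfolding B_def cnd_def by (rule bad_card)
          then show "real (card {i\<in>B. \<not> cnd i s}) \<le> real (nat \<bar>s\<bar>)" by simp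
        qed
        also have "\<dots> = real W" by (simp add: W_def)
        finally show ?thesis .
      qed
      have V3: "V = of_real ((\<Sum>k<L. cmod (f k)) / real L) - (\<Sum>k<L. u k * E k) / (of_nat L)^2"
      proof -
        have "(\<Sum>k<L. u k * (of_nat L * f k - E k)) = of_nat L * (\<Sum>k<L. complex_of_real (cmod (f k))) - (\<Sum>k<L. u k * E k)"
          by (simp add: right_diff_distrib sum_subtractf sum_distrib_left uf[symmetric] ac_simps)
        then show ?thesis unfolding V2 G using L1
          by (simp add: diff_divide_distrib power2_eq_square)
      qed
      have "cmod ((\<Sum>k<L. u k * E k) / (of_nat L)^2) \<le> real W / real L"
      proof -
        have "cmod (\<Sum>k<L. u k * E k) \<le> (\<Sum>k<L. real W)"
        proof (rule order_trans[OF norm_sum sum_mono])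
          fix k
          have "cmod (u k) * cmod (E k) \<le> 1 * real W"
            by (rule mult_mono[OF u1 Eb]) auto
          then show "cmod (u k * E k) \<le> real W" by (simp add: norm_mult)
        qed
        then have c: "cmod (\<Sum>k<L. u k * E k) \<le> real L * real W" by simp
        have "cmod ((\<Sum>k<L. u k * E k) / (of_nat L)^2) = cmod (\<Sum>k<L. u k * E k) / (real L * real L)"
          by (simp add: norm_divide norm_power norm_mult power2_eq_square)
        also have "\<dots> \<le> real L * real W / (real L * real L)"
          by (rule divide_right_mono[OF c]) simp
        also have "\<dots> = real W / real L" using L1 by simp
        finally show ?thesis .
      qed
      moreover
      {
        define A where "A = (\<Sum>k<L. cmod (f k)) / real L"
        have A0: "A \<ge> 0" unfolding A_def by (simp add: sum_nonneg)
        have nA: "cmod (complex_of_real A) = A" using A0 by simp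
        have "cmod V \<ge> A - cmod ((\<Sum>k<L. u k * E k) / (of_nat L)^2)"
          unfolding V3 A_def[symmetric] using norm_triangle_ineq2[of "complex_of_real A" "(\<Sum>k<L. u k * E k) / (of_nat L)^2"]
          unfolding nA .
        then have "cmod V \<ge> (\<Sum>k<L. cmod (f k)) / real L - cmod ((\<Sum>k<L. u k * E k) / (of_nat L)^2)"
          unfolding A_def .
      }
      ultimately have "cmod V \<ge> (\<Sum>k<L. cmod (f k)) / real L - real W / real L" by linarith
      moreover have "(\<Sum>k<L. cmod (f k)) / real L \<ge> 5/9 * sqrt (real m)"
        using \<phi>2 L1 unfolding f_def by (simp add: field_simps)
      moreover have "real W / real L \<le> 1/4" using L1 by (simp add: L_def field_simps)
      moreover have "sqrt (real m) \<ge> 1" using m1 by simp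
      ultimately have "cmod V \<ge> sqrt (real (card S)) / 4" unfolding m_def by linarith
      then have "ereal (sqrt (real (card S)) / 4) \<le> ereal (cmod V)" by simp
      then show ?thesis
        using mat_norm_geI[OF nv nv, of "\<lambda>i j. X i j * T i j"] unfolding V_def
        by (rule order_trans)
    qed
    show "\<exists>X T. (\<forall>i j. X i j \<noteq> 0 \<longrightarrow> int i - int j \<in> S \<and> b0 \<le> i \<and> i < b0 + L) \<and>
     (\<forall>i j. cmod (X i j) \<le> 1) \<and>
     (\<forall>i j. T i j \<noteq> 0 \<longrightarrow> b0 \<le> i \<and> i < b0 + L) \<and>
     mat_norm T \<le> 1 \<and>
     ereal (sqrt (real (card S)) / 4) \<le> mat_norm (\<lambda>i j. X i j * T i j)"
      by (intro exI[of _ X] exI[of _ T] conjI T1 lowb allI impI)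
         (auto simp: X_def T_def Tm_def B_def \<phi>1 split: if_splits)
  qed
qed


lemma schur_sup_ge: "X \<in> schur_class P \<Longrightarrow> schur_norm X \<le> schur_sup P"
  unfolding schur_sup_def by (rule SUP_upper)

lemma schur_norm_ge: "mat_norm T \<le> 1 \<Longrightarrow> mat_norm (\<lambda>i j. X i j * T i j) \<le> schur_norm X"
  unfolding schur_norm_def by (rule SUP_upper) simp

lemma zero_class: "(\<lambda>i j. 0) \<in> schur_class P"
  by (simp add: schur_class_def)

lemma schur_sup_nonneg: "0 \<le> schur_sup P"
proof -
  have m0: "mat_norm (\<lambda>i j. 0) \<le> ereal 0"
    by (rule mat_norm_leI) simp
  have "ereal 0 \<le> mat_norm (\<lambda>i j. (0::complex) * 0)"
    using mat_norm_geI[where n=0 and x="\<lambda>_. 0" and y="\<lambda>_. 0" and A="\<lambda>i j. (0::complex) * 0"] by simp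
  also have "\<dots> \<le> schur_norm (\<lambda>i j. 0)"
    by (rule schur_norm_ge) (rule order_trans[OF m0], simp add: one_ereal_def)
  also have "\<dots> \<le> schur_sup P" by (rule schur_sup_ge[OF zero_class])
  finally show ?thesis by (simp add: zero_ereal_def)
qed

lemma finite_lower:
  assumes fS: "finite S"
  shows "ereal (1/4) * sqrt_card S \<le> schur_sup (toeplitz_pattern S)"
proof (cases "S = {}")
  case True
  then show ?thesis using schur_sup_nonneg by (simp add: sqrt_card_def zero_ereal_def[symmetric])
next
  case False
  obtain L where "L \<ge> 1" and w: "\<forall>b0. \<exists>X T.
     (\<forall>i j. X i j \<noteq> 0 \<longrightarrow> int i - int j \<in> S \<and> b0 \<le> i \<and> i < b0 + L) \<and>
     (\<forall>i j. cmod (X i j) \<le> 1) \<and>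
     (\<forall>i j. T i j \<noteq> 0 \<longrightarrow> b0 \<le> i \<and> i < b0 + L) \<and>
     mat_norm T \<le> 1 \<and>
     ereal (sqrt (real (card S)) / 4) \<le> mat_norm (\<lambda>i j. X i j * T i j)"
    using witness[OF fS False] by blast
  from spec[OF w, of 0] obtain X T where H: "(\<forall>i j. X i j \<noteq> 0 \<longrightarrow> int i - int j \<in> S \<and> 0 \<le> i \<and> i < 0 + L) \<and>
     (\<forall>i j. cmod (X i j) \<le> 1) \<and>
     (\<forall>i j. T i j \<noteq> 0 \<longrightarrow> 0 \<le> i \<and> i < 0 + L) \<and>
     mat_norm T \<le> 1 \<and>
     ereal (sqrt (real (card S)) / 4) \<le> mat_norm (\<lambda>i j. X i j * T i j)" by blast
  have X1: "\<forall>i j. X i j \<noteq> 0 \<longrightarrow> int i - int j \<in> S" and X2: "\<forall>i j. cmod (X i j) \<le> 1"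
    and T: "mat_norm T \<le> 1" and V: "ereal (sqrt (real (card S)) / 4) \<le> mat_norm (\<lambda>i j. X i j * T i j)"
    using H by auto
  have XC: "X \<in> schur_class (toeplitz_pattern S)"
    using X1 X2 by (auto simp: schur_class_def toeplitz_pattern_def)
  have "ereal (1/4) * sqrt_card S = ereal (sqrt (real (card S)) / 4)"
    using fS by (simp add: sqrt_card_def)
  also note V
  also have "mat_norm (\<lambda>i j. X i j * T i j) \<le> schur_norm X" by (rule schur_norm_ge[OF T])
  also have "\<dots> \<le> schur_sup (toeplitz_pattern S)" by (rule schur_sup_ge[OF XC])
  finally show ?thesis .
qed

lemma finite_upper:
  assumes fS: "finite S"
  shows "schur_sup (toeplitz_pattern S) \<le> sqrt_card S"
  unfolding schur_sup_def sqrt_card_def using fS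
  by (auto intro!: SUP_least upper)

lemma infinite_unbounded:
  assumes inf: "infinite S"
  shows "\<exists>X \<in> schur_class (toeplitz_pattern S). schur_norm X = \<infinity>"
proof -
  define P where "P = (\<lambda>k L b0 (X :: nat \<Rightarrow> nat \<Rightarrow> complex) (T :: nat \<Rightarrow> nat \<Rightarrow> complex).
     (\<forall>i j. X i j \<noteq> 0 \<longrightarrow> int i - int j \<in> S \<and> b0 \<le> i \<and> i < b0 + L) \<and>
     (\<forall>i j. cmod (X i j) \<le> 1) \<and>
     (\<forall>i j. T i j \<noteq> 0 \<longrightarrow> b0 \<le> i \<and> i < b0 + L) \<and>
     mat_norm T \<le> 1 \<and>
     ereal (real (Suc k)) \<le> mat_norm (\<lambda>i j. X i j * T i j))"
  have "\<exists>L\<ge>1. \<forall>b0. \<exists>X T. P k L b0 X T" for k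
  proof -
    obtain Sk where Sk: "finite Sk" "card Sk = (4 * Suc k)^2" "Sk \<subseteq> S"
      using infinite_arbitrarily_large[OF inf] by blast
    have ne: "Sk \<noteq> {}" using Sk by auto
    have sq: "sqrt (real (card Sk)) / 4 = real (Suc k)"
      using Sk(2) by simp
    obtain L where "L \<ge> 1" and w: "\<forall>b0. \<exists>X T.
     (\<forall>i j. X i j \<noteq> 0 \<longrightarrow> int i - int j \<in> Sk \<and> b0 \<le> i \<and> i < b0 + L) \<and>
     (\<forall>i j. cmod (X i j) \<le> 1) \<and>
     (\<forall>i j. T i j \<noteq> 0 \<longrightarrow> b0 \<le> i \<and> i < b0 + L) \<and>
     mat_norm T \<le> 1 \<and>
     ereal (sqrt (real (card Sk)) / 4) \<le> mat_norm (\<lambda>i j. X i j * T i j)"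
      using witness[OF Sk(1) ne] by blast
    have "\<forall>b0. \<exists>X T. P k L b0 X T"
    proof
      fix b0
      from w obtain X T where "(\<forall>i j. X i j \<noteq> 0 \<longrightarrow> int i - int j \<in> Sk \<and> b0 \<le> i \<and> i < b0 + L) \<and>
     (\<forall>i j. cmod (X i j) \<le> 1) \<and>
     (\<forall>i j. T i j \<noteq> 0 \<longrightarrow> b0 \<le> i \<and> i < b0 + L) \<and>
     mat_norm T \<le> 1 \<and>
     ereal (sqrt (real (card Sk)) / 4) \<le> mat_norm (\<lambda>i j. X i j * T i j)" by blast
      then have "P k L b0 X T" unfolding P_def sq using Sk(3) by blast
      then show "\<exists>X T. P k L b0 X T" by blast
    qed
    then show ?thesis using \<open>L \<ge> 1\<close> by blast
  qed
  then obtain Lf where Lf: "\<And>k. Lf k \<ge> 1" "\<And>k. \<forall>b0. \<exists>X T. P k (Lf k) b0 X T"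
    by metis
  define off where "off = (\<lambda>k. \<Sum>l<k. Lf l)"
  have "\<forall>k. \<exists>XT. P k (Lf k) (off k) (fst XT) (snd XT)"
    using Lf(2) by auto
  then obtain XT where XT: "\<And>k. P k (Lf k) (off k) (fst (XT k)) (snd (XT k))"
    by metis
  define Xf where "Xf = (\<lambda>k. fst (XT k))"
  define Tf where "Tf = (\<lambda>k. snd (XT k))"
  have XT': "P k (Lf k) (off k) (Xf k) (Tf k)" for k using XT by (simp add: Xf_def Tf_def)
  have offmono: "a \<le> b \<Longrightarrow> off a \<le> off b" for a b
    unfolding off_def by (rule sum_mono2) auto
  have offSuc: "off (Suc k) = off k + Lf k" for k by (simp add: off_def)
  define bl where "bl = (\<lambda>i. LEAST k. i < off (Suc k))"
  have blk: "bl i = k" if "off k \<le> i" "i < off k + Lf k" for i k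
    unfolding bl_def
  proof (rule Least_equality)
    show "i < off (Suc k)" using that offSuc by simp
  next
    fix y assume y: "i < off (Suc y)"
    show "k \<le> y"
    proof (rule ccontr)
      assume "\<not> k \<le> y"
      then have "Suc y \<le> k" by simp
      then have "off (Suc y) \<le> off k" by (rule offmono)
      then show False using y that by simp
    qed
  qed
  define X where "X = (\<lambda>i j. Xf (bl i) i j)"
  have XC: "X \<in> schur_class (toeplitz_pattern S)"
  proof -
    have "X i j \<noteq> 0 \<Longrightarrow> int i - int j \<in> S" for i j
      using XT'[of "bl i"] by (simp add: X_def P_def)
    moreover have "cmod (X i j) \<le> 1" for i j
      using XT'[of "bl i"] by (simp add: X_def P_def)
    ultimately show ?thesis by (auto simp: schur_class_def toeplitz_pattern_def)
  qed
  have big: "ereal (real (Suc k)) \<le> schur_norm X" for k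
  proof -
    have eq: "(\<lambda>i j. X i j * Tf k i j) = (\<lambda>i j. Xf k i j * Tf k i j)"
    proof (intro ext)
      fix i j
      show "X i j * Tf k i j = Xf k i j * Tf k i j"
      proof (cases "Tf k i j = 0")
        case False
        then have "off k \<le> i" "i < off k + Lf k" using XT'[of k] by (auto simp: P_def)
        then show ?thesis by (simp add: X_def blk)
      qed simp
    qed
    have "ereal (real (Suc k)) \<le> mat_norm (\<lambda>i j. Xf k i j * Tf k i j)"
      using XT'[of k] by (simp add: P_def)
    also have "\<dots> = mat_norm (\<lambda>i j. X i j * Tf k i j)" by (simp add: eq)
    also have "\<dots> \<le> schur_norm X"
      by (rule schur_norm_ge) (use XT'[of k] in \<open>simp add: P_def\<close>)
    finally show ?thesis .
  qed
  have "schur_norm X = \<infinity>"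
  proof (cases "schur_norm X")
    case (real r)
    obtain k :: nat where "real k > r" using reals_Archimedean2 by blast
    then show ?thesis using big[of k] real by simp
  next
    case MInf
    then show ?thesis using big[of 0] by simp
  qed simp
  then show ?thesis using XC by blast
qed

theorem proposition3p2:
  fixes S :: "int set"
  shows "ereal (1/4) * sqrt_card S \<le> schur_sup (toeplitz_pattern S)
       \<and> schur_sup (toeplitz_pattern S) \<le> sqrt_card S
       \<and> (infinite S \<longrightarrow> \<not> schur_bounded (toeplitz_pattern S))"
proof (cases "finite S")
  case True
  then show ?thesis using finite_lower finite_upper by blast
next
  case False
  obtain X where XC: "X \<in> schur_class (toeplitz_pattern S)" and Xi: "schur_norm X = \<infinity>"
    using infinite_unbounded[OF False] by blast
  have sup: "schur_sup (toeplitz_pattern S) = \<infinity>"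
    using schur_sup_ge[OF XC] Xi by simp
  have nb: "\<not> schur_bounded (toeplitz_pattern S)"
    unfolding schur_bounded_def using XC Xi by auto
  show ?thesis using False sup nb by (simp add: sqrt_card_def)
qed

end
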